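(* Let $G=(V,E)$ be a connected simple graph and let $\pi:V\to\mathbb{N}$ be any injection. Then the graph $G^{(\pi)}$ is connected.
   Context: For a vertex $u$, $N(u)=\{v\in V: uv\in E\}$ is its open neighbourhood. Given an injection $\pi:V\to\mathbb{N}$ (an ordering of the vertices), an ordered pair $(u,v)\in V^2$ is called good with respect to $\pi$ if $uv\in E$, $\pi(u)<\pi(v)$, and $\pi(u)<\pi(w)$ for every $w\in N(u)\cap N(v)$. The graph $G^{(\pi)}=(V,E^{(\pi)})$ is the spanning subgraph of $G$ with edge set $E^{(\pi)}=\{\{u,v\}: (u,v)\text{ is good with respect to }\pi\}$. *)

theory Defs
  imports Main
begin

definition simple_graph :: "'a set \<Rightarrow> 'a set set \<Rightarrow> bool" where
  "simple_graph V E \<longleftrightarrow> finite V \<and> (\<forall>e\<in>E. e \<subseteq> V \<and> card e = 2)"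

definition nbhd :: "'a set set \<Rightarrow> 'a \<Rightarrow> 'a set" where
  "nbhd E u = {v. {u, v} \<in> E}"

fun is_walk :: "'a set set \<Rightarrow> 'a list \<Rightarrow> bool" where
  "is_walk E [] = False"
| "is_walk E [x] = True"
| "is_walk E (x # y # xs) = ({x, y} \<in> E \<and> is_walk E (y # xs))"

definition connected_graph :: "'a set \<Rightarrow> 'a set set \<Rightarrow> bool" where
  "connected_graph V E \<longleftrightarrow> V \<noteq> {} \<and>
     (\<forall>u\<in>V. \<forall>v\<in>V. \<exists>p. is_walk E p \<and> hd p = u \<and> last p = v)"

definition good_pair :: "'a set set \<Rightarrow> ('a \<Rightarrow> nat) \<Rightarrow> 'a \<Rightarrow> 'a \<Rightarrow> bool" where
  "good_pair E \<pi> u v \<longleftrightarrow> {u, v} \<in> E \<and> \<pi> u < \<pi> v \<and>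
     (\<forall>w \<in> nbhd E u \<inter> nbhd E v. \<pi> u < \<pi> w)"

definition pi_edges :: "'a set set \<Rightarrow> ('a \<Rightarrow> nat) \<Rightarrow> 'a set set" where
  "pi_edges E \<pi> = {{u, v} | u v. good_pair E \<pi> u v}"

end

theory Submission
  imports Defs
begin

lemma walk_rtrancl:
  "is_walk F p \<Longrightarrow> (\<lambda>x y. {x,y}\<in>F)\<^sup>*\<^sup>* (hd p) (last p)"
proof (induction F p rule: is_walk.induct)
  case (3 E x y xs)
  then show ?case by (auto intro: converse_rtranclp_into_rtranclp)
qed auto

lemma rtrancl_walk:
  "(\<lambda>x y. {x,y}\<in>F)\<^sup>*\<^sup>* x y \<Longrightarrow> \<exists>p. is_walk F p \<and> hd p = x \<and> last p = y"
proof (induction rule: converse_rtranclp_induct)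
  case base
  then show ?case by (intro exI[of _ "[y]"]) auto
next
  case (step a b)
  then obtain p where p: "is_walk F p" "hd p = b" "last p = y" by blast
  then obtain q where "p = b # q" by (cases p) auto
  with p step(1) show ?case by (intro exI[of _ "a # p"]) auto
qed

lemma rtranclp_sym:
  assumes "\<And>x y. A x y \<Longrightarrow> A y x" "A\<^sup>*\<^sup>* x y" shows "A\<^sup>*\<^sup>* y x"
  using assms(2)
proof (induction rule: rtranclp_induct)
  case (step y z)
  then show ?case using assms(1) by (meson converse_rtranclp_into_rtranclp)
qed auto

lemma rtranclp_sym_edges:
  "(\<lambda>x y. {x,y}\<in>F)\<^sup>*\<^sup>* x y \<Longrightarrow> (\<lambda>x y. {x,y}\<in>F)\<^sup>*\<^sup>* y x"
  by (rule rtranclp_sym) (auto simp: insert_commute)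

lemma key:
  assumes sg: "simple_graph V E" and inj: "inj_on \<pi> V"
  shows "{u,v}\<in>E \<Longrightarrow> (\<lambda>x y. {x,y}\<in>pi_edges E \<pi>)\<^sup>*\<^sup>* u v"
proof -
  let ?A = "\<lambda>x y. {x,y}\<in>pi_edges E \<pi>"
  have symA: "\<And>x y. ?A x y \<Longrightarrow> ?A y x" by (simp add: insert_commute)
  have edge: "\<And>a b. {a,b}\<in>E \<Longrightarrow> a \<in> V \<and> b \<in> V \<and> a \<noteq> b"
  proof -
    fix a b assume "{a,b}\<in>E"
    then have "{a,b} \<subseteq> V" "card {a,b} = 2" using sg unfolding simple_graph_def by auto
    then show "a \<in> V \<and> b \<in> V \<and> a \<noteq> b" by (cases "a = b") auto
  qed
  have "\<forall>u v. {u,v}\<in>E \<and> min (\<pi> u) (\<pi> v) = n \<longrightarrow> ?A\<^sup>*\<^sup>* u v" for n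
  proof (induction n rule: less_induct)
    case (less n)
    show ?case
    proof (intro allI impI)
      fix u v assume h: "{u,v}\<in>E \<and> min (\<pi> u) (\<pi> v) = n"
      have main: "?A\<^sup>*\<^sup>* a b" if ab: "{a,b}\<in>E" "\<pi> a < \<pi> b" "\<pi> a = n" for a b
      proof (cases "good_pair E \<pi> a b")
        case True
        then have "?A a b" unfolding pi_edges_def by blast
        then show ?thesis by blast
      next
        case False
        then obtain w where w: "w \<in> nbhd E a" "w \<in> nbhd E b" "\<not> \<pi> a < \<pi> w"
          using ab unfolding good_pair_def by blast
        have e1: "{a,w}\<in>E" and e2: "{w,b}\<in>E" using w unfolding nbhd_def
          by (auto simp: insert_commute)
        have "w \<in> V" "a \<in> V" "a \<noteq> w" using edge[OF e1] by auto
        then have "\<pi> w \<noteq> \<pi> a" using inj unfolding inj_on_def by blast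
        then have lt: "\<pi> w < \<pi> a" using w(3) by simp
        have IH: "\<forall>u v. {u,v}\<in>E \<and> min (\<pi> u) (\<pi> v) = \<pi> w \<longrightarrow> ?A\<^sup>*\<^sup>* u v"
          using less lt ab(3) by blast
        have "min (\<pi> a) (\<pi> w) = \<pi> w" "min (\<pi> w) (\<pi> b) = \<pi> w" using lt ab(2) by auto
        then have "?A\<^sup>*\<^sup>* a w" "?A\<^sup>*\<^sup>* w b" using IH e1 e2 by blast+
        then show ?thesis by (rule rtranclp_trans)
      qed
      have "u \<in> V" "v \<in> V" "u \<noteq> v" using edge h by auto
      then have "\<pi> u \<noteq> \<pi> v" using inj unfolding inj_on_def by blast
      then show "?A\<^sup>*\<^sup>* u v"
      proof (cases "\<pi> u < \<pi> v")
        case True then show ?thesis using main[of u v] h by (simp add: min_def)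
      next
        case False
        with \<open>\<pi> u \<noteq> \<pi> v\<close> have "\<pi> v < \<pi> u" by simp
        moreover have "{v,u}\<in>E" using h by (simp add: insert_commute)
        ultimately have "?A\<^sup>*\<^sup>* v u" using main[of v u] h by (simp add: min_def)
        then show ?thesis by (rule rtranclp_sym_edges)
      qed
    qed
  qed
  then show "{u,v}\<in>E \<Longrightarrow> ?A\<^sup>*\<^sup>* u v" by blast
qed

theorem lemma2:
  fixes V :: "'a set" and E :: "'a set set" and \<pi> :: "'a \<Rightarrow> nat"
  assumes "simple_graph V E"
    and "connected_graph V E"
    and "inj_on \<pi> V"
  shows "connected_graph V (pi_edges E \<pi>)"
  unfolding connected_graph_def
proof (intro conjI ballI)
  show "V \<noteq> {}" using assms(2) unfolding connected_graph_def by blast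
next
  fix u v assume uv: "u \<in> V" "v \<in> V"
  then obtain p where p: "is_walk E p" "hd p = u" "last p = v"
    using assms(2) unfolding connected_graph_def by blast
  have "(\<lambda>x y. {x,y}\<in>E)\<^sup>*\<^sup>* u v" using walk_rtrancl[OF p(1)] p by simp
  then have "(\<lambda>x y. {x,y}\<in>pi_edges E \<pi>)\<^sup>*\<^sup>* u v"
  proof (induction rule: rtranclp_induct)
    case (step y z)
    then show ?case using key[OF assms(1,3), of y z] rtranclp_trans[of _ u y z] by blast
  qed auto
  then show "\<exists>p. is_walk (pi_edges E \<pi>) p \<and> hd p = u \<and> last p = v"
    by (rule rtrancl_walk)
qed

end
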